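(* For every integer $j\ge 0$, $$\sum_{n=1}^{\infty}\frac{\binom{2n}{n}}{n\,4^n}\,\zeta_n^{\star}(\{2\}_j)=2\,\eta(2j+1).$$
   Context: For integers $n\ge1$ and $j\ge0$, the multiple harmonic star sum of depth $j$ and weight $2j$ is $\zeta_n^{\star}(\{2\}_j)=\sum_{n\ge k_1\ge\dots\ge k_j\ge1}\prod_{i=1}^j\frac{1}{k_i^2}$, with $\zeta_n^{\star}(\{2\}_0)=1$. $\eta$ denotes the Dirichlet eta function, $\eta(s)=\sum_{n=1}^\infty\frac{(-1)^{n-1}}{n^s}$, with $\eta(1)=\ln 2$. *)

theory Defs
  imports "HOL-Analysis.Analysis"
begin

definition star_tuples :: "nat \<Rightarrow> nat \<Rightarrow> nat list set" where
  "star_tuples n j = {ks. length ks = j \<and> set ks \<subseteq> {1..n} \<and> sorted_wrt (\<ge>) ks}"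

definition zeta_star2 :: "nat \<Rightarrow> nat \<Rightarrow> real" where
  "zeta_star2 n j = (\<Sum>ks\<in>star_tuples n j. \<Prod>i<j. 1 / (real (ks ! i))^2)"

definition dirichlet_eta :: "real \<Rightarrow> real" where
  "dirichlet_eta s = (\<Sum>n. (-1)^n / (real (n+1)) powr s)"

end

theory Submission imports Defs "HOL-Real_Asymp.Real_Asymp" begin

definition ca :: "nat \<Rightarrow> real" where "ca n = real ((2*n) choose n) / 4^n"
definition ww :: "nat \<Rightarrow> nat \<Rightarrow> real" where
  "ww n k = (if k \<le> n then (fact n)^2 / (fact (n-k) * fact (n+k)) else 0)"
definition FF :: "nat \<Rightarrow> nat \<Rightarrow> real" where "FF n k = ca n * ww n k / real n"
definition PP :: "nat \<Rightarrow> nat \<Rightarrow> real" where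
  "PP n j = 2 * (\<Sum>k=1..n. (-1)^(k-1) * ww n k / real k ^ (2*j))"

lemma ca_fact: "ca n = fact (2*n) / ((fact n)^2 * 4^n)"
  unfolding ca_def by (simp add: binomial_fact power2_eq_square)

lemma ca_Suc: "ca (Suc n) = ca n * (2*n+1) / (2*n+2)"
proof -
  have f: "(fact (2*Suc n) :: real) = (2*n+2)*(2*n+1) * fact (2*n)"
    by (simp add: algebra_simps)
  have g: "(fact (Suc n) :: real) = (n+1) * fact n" by (simp add: algebra_simps)
  have h: "(4::real)^(Suc n) = 4 * 4^n" by simp
  have p: "fact n > (0::real)" by simp
  show ?thesis unfolding ca_fact f g h using p by (simp add: divide_simps power2_eq_square) (simp add: algebra_simps, smt (verit) p mult_nonneg_nonneg of_nat_0_le_iff)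
qed

lemma ca_pos: "ca n > 0" unfolding ca_def by simp

lemma ca_sq: "(ca n)^2 \<le> 1 / (2*n+1)"
proof (induction n)
  case 0 then show ?case by (simp add: ca_def)
next
  case (Suc n)
  have "(ca (Suc n))^2 = (ca n)^2 * ((2*n+1)/(2*n+2))^2"
    by (simp add: ca_Suc power2_eq_square)
  also have "\<dots> \<le> 1/(2*n+1) * ((2*n+1)/(2*n+2))^2"
    by (intro mult_right_mono) (use Suc in \<open>simp_all add: algebra_simps\<close>)
  also have "\<dots> \<le> 1 / (2 * real (Suc n) + 1)"
  proof -
    have "(2*real n+1)*(2*n+3) \<le> (2*n+2)^2" by (simp add: power2_eq_square algebra_simps)
    then show ?thesis by (simp add: divide_simps power2_eq_square) (simp add: algebra_simps)
  qed
  finally show ?case .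
qed

lemma ca_le1: "ca n \<le> 1"
proof -
  have "(ca n)^2 \<le> 1" using ca_sq[of n] by (rule order_trans) (simp add: field_simps)
  then show ?thesis using ca_pos[of n] by (simp add: power_le_one_iff abs_le_square_iff)
qed

lemma ca_lim: "ca \<longlonglongrightarrow> 0"
proof -
  have "(\<lambda>n. (ca n)^2) \<longlonglongrightarrow> 0"
  proof (rule real_tendsto_sandwich[of "\<lambda>_. 0" _ _ "\<lambda>n. 1 / (2*real n+1)"])
    show "\<forall>\<^sub>F n in sequentially. 0 \<le> (ca n)^2" by simp
    show "\<forall>\<^sub>F n in sequentially. (ca n)^2 \<le> 1 / (2*real n+1)" using ca_sq by simp
    show "(\<lambda>n. 1 / (2*real n+1)) \<longlonglongrightarrow> 0" by real_asymp
  qed simp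
  then have "(\<lambda>n. sqrt ((ca n)^2)) \<longlonglongrightarrow> sqrt 0" by (rule tendsto_real_sqrt)
  then show ?thesis using ca_pos by (simp add: less_imp_le)
qed

lemma ww_0[simp]: "ww n 0 = 1"
  by (simp add: ww_def power2_eq_square)

lemma ww_gt[simp]: "n < k \<Longrightarrow> ww n k = 0"
  by (simp add: ww_def)

lemma ww_Suc_k: "k \<le> n \<Longrightarrow> ww n (Suc k) * (real n + real k + 1) = ww n k * (real n - real k)"
proof (cases "k = n")
  case True then show ?thesis by simp
next
  case False
  assume "k \<le> n"
  with False have kn: "k < n" by simp
  have e1: "n - k = Suc (n - Suc k)" using kn by simp
  have f1: "(fact (n-k) :: real) = (real n - real k) * fact (n - Suc k)"
    unfolding e1 using kn by (simp add: of_nat_diff)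
  have f2: "(fact (n + Suc k) :: real) = (real n + real k + 1) * fact (n + k)"
    by (simp add: algebra_simps)
  have p1: "(fact (n - Suc k) :: real) > 0" "(fact (n+k) :: real) > 0" by simp_all
  have p2: "real n - real k > 0" using kn by simp
  have w1: "ww n (Suc k) = (fact n)^2 / (fact (n - Suc k) * ((real n + real k + 1) * fact (n + k)))"
    unfolding ww_def using kn f2 by simp
  have w2: "ww n k = (fact n)^2 / (((real n - real k) * fact (n - Suc k)) * fact (n + k))"
    unfolding ww_def using kn f1 by simp
  have gen: "\<And>A B C x y. B > 0 \<Longrightarrow> C > 0 \<Longrightarrow> x > 0 \<Longrightarrow> y > 0 \<Longrightarrow>
     A / (B * (x * C)) * x = A / ((y * B) * C) * (y::real)" by (simp add: field_simps)
  have "real n + real k + 1 > 0" by simp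
  then show ?thesis unfolding w1 w2 using p1 p2 by (intro gen) auto
qed

lemma ww_Suc_n: "k \<le> Suc n \<Longrightarrow> ww (Suc n) k * ((real n + 1)^2 - (real k)^2) = ww n k * (real n + 1)^2"
proof (cases "k = Suc n")
  case True then show ?thesis by simp
next
  case False
  assume "k \<le> Suc n"
  with False have kn: "k \<le> n" by simp
  have e1: "Suc n - k = Suc (n - k)" using kn by simp
  have f1: "(fact (Suc n - k) :: real) = (real n + 1 - real k) * fact (n - k)"
    unfolding e1 using kn by (simp add: of_nat_diff algebra_simps)
  have f2: "(fact (Suc n + k) :: real) = (real n + real k + 1) * fact (n + k)"
    by (simp add: algebra_simps)
  have f3: "(fact (Suc n) :: real) = (real n + 1) * fact n"
    by (simp add: algebra_simps)
  have p1: "(fact (n - k) :: real) > 0" "(fact (n+k) :: real) > 0" by simp_all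
  have p2: "real n + 1 - real k > 0" using kn by simp
  have e2: "(real n + 1)^2 - (real k)^2 = (real n + 1 - real k) * (real n + real k + 1)"
    by (simp add: power2_eq_square algebra_simps)
  have w1: "ww (Suc n) k = ((real n + 1) * fact n)^2 / (((real n + 1 - real k) * fact (n - k)) * ((real n + real k + 1) * fact (n + k)))"
    unfolding ww_def using kn f1 f2 f3 by (simp add: ac_simps)
  have w2: "ww n k = (fact n)^2 / (fact (n - k) * fact (n + k))"
    unfolding ww_def using kn by simp
  have gen: "\<And>A B C x y z. B > 0 \<Longrightarrow> C > 0 \<Longrightarrow> x > 0 \<Longrightarrow> y > 0 \<Longrightarrow>
     (z * A)^2 / ((x * B) * (y * C)) * (x * y) = A^2 / (B * C) * (z::real)^2" by (simp add: field_simps power2_eq_square)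
  have "real n + real k + 1 > 0" by simp
  then show ?thesis unfolding w1 w2 e2 using p1 p2 by (intro gen) auto
qed

lemma ww_bounds: "0 \<le> ww n k \<and> ww n k \<le> 1"
proof (induction k)
  case 0 then show ?case by simp
next
  case (Suc k)
  show ?case
  proof (cases "k < n")
    case True
    have "ww n (Suc k) = ww n k * ((real n - real k) / (real n + real k + 1))"
      using ww_Suc_k[of k n] True by (simp add: field_simps)
    moreover have "0 \<le> (real n - real k) / (real n + real k + 1)"
      "(real n - real k) / (real n + real k + 1) \<le> 1" using True by auto
    ultimately show ?thesis using Suc by (metis mult_le_one mult_nonneg_nonneg)
  next
    case False then show ?thesis by simp
  qed
qed

definition GG :: "nat \<Rightarrow> nat \<Rightarrow> real" where "GG k m = -2 * (real m - real k) * FF m k"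

lemma zeil_gen:
  fixes c w x y :: real
  assumes "x \<ge> 1" "0 \<le> y" "y \<le> x"
  shows "(y+1)*(c*(w*(x-y)/(x+y+1))/x) - y*(c*w/x) =
    -2*((x+1)-y)*((c*(2*x+1)/(2*x+2))*(w*(x+1)^2/((x+1-y)*(x+1+y)))/(x+1)) - (-2*(x-y)*(c*w/x))"
proof -
  have p: "x+1-y \<noteq> 0" "x+1+y \<noteq> 0" "x \<noteq> 0" "x+y+1 \<noteq> 0" "2*x+2 \<noteq> 0" "x+1\<noteq>0" "(x+y+1)*x \<noteq> 0" using assms by auto
  have l: "(y+1)*(c*(w*(x-y)/(x+y+1))/x) - y*(c*w/x) = c*w*((x-2*y^2-2*y)/((x+y+1)*x))"
    using p by (simp add: divide_simps) (simp add: algebra_simps power2_eq_square)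
  have r: "-2*((x+1)-y)*((c*(2*x+1)/(2*x+2))*(w*(x+1)^2/((x+1-y)*(x+1+y)))/(x+1)) - (-2*(x-y)*(c*w/x))
     = c*w*(-(2*x+1)/(x+1+y) + 2*(x-y)/x)"
    using p by (simp add: divide_simps) (simp add: algebra_simps power2_eq_square)
  have s: "(x-2*y^2-2*y)/((x+y+1)*x) = -(2*x+1)/(x+1+y) + 2*(x-y)/x"
    using p by (simp add: divide_simps) (simp add: algebra_simps power2_eq_square)
  show ?thesis unfolding l r s ..
qed

lemma FF_zeil: "n \<ge> 1 \<Longrightarrow> (real k + 1) * FF n (Suc k) - real k * FF n k = GG k (Suc n) - GG k n"
proof (cases "k \<le> n")
  case True
  assume n1: "n \<ge> 1"
  have a1: "ww n (Suc k) = ww n k * (real n - real k) / (real n + real k + 1)"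
    using ww_Suc_k[OF True] by (simp add: field_simps)
  have pos: "(real n + 1 - real k)*(real n + 1 + real k) > 0" using True by auto
  have dd: "(real n + 1)^2 - (real k)^2 = (real n + 1 - real k)*(real n + 1 + real k)"
    by (simp add: power2_eq_square algebra_simps)
  have a2: "ww (Suc n) k = ww n k * (real n + 1)^2 / ((real n + 1 - real k)*(real n + 1 + real k))"
    using ww_Suc_n[of k n] True pos unfolding dd by (simp add: field_simps)
  have "(real k + 1) * FF n (Suc k) - real k * FF n k =
    (real k+1)*(ca n*(ww n k*(real n-real k)/(real n+real k+1))/real n) - real k*(ca n*ww n k/real n)"
    unfolding FF_def a1 by simp
  also have "\<dots> = -2*((real n+1)-real k)*((ca n*(2*real n+1)/(2*real n+2))*(ww n k*(real n+1)^2/((real n+1-real k)*(real n+1+real k)))/(real n+1)) - (-2*(real n-real k)*(ca n*ww n k/real n))"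
    using n1 True by (intro zeil_gen) auto
  also have "\<dots> = GG k (Suc n) - GG k n"
    unfolding GG_def FF_def a2 ca_Suc by (simp add: algebra_simps)
  finally show ?thesis .
next
  case False
  then show ?thesis
    by (cases "k = Suc n") (auto simp: GG_def FF_def)
qed

lemma sum_1_shift: "(\<Sum>k=1..n. g k) = (\<Sum>i<n. g (Suc i))"
  by (induction n) (simp_all add: add.commute)

lemma PP_0: "n \<ge> 1 \<Longrightarrow> PP n 0 = 1"
proof -
  assume n1: "n \<ge> 1"
  define v where "v k = ww n k * (real n + real k) / (2 * real n)" for k
  define u where "u k = (-1)^k * v k" for k
  have step: "(-1)^k * ww n k = u k - u (Suc k)" if "k \<le> n" for k
  proof -
    have "ww n (Suc k) * (real n + real (Suc k)) = ww n k * (real n - real k)"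
      using ww_Suc_k[OF that] by (simp add: algebra_simps)
    then have vs: "v (Suc k) = ww n k * (real n - real k) / (2 * real n)" unfolding v_def by simp
    have "ww n k = v k + v (Suc k)" unfolding vs unfolding v_def using n1
      by (simp add: field_simps)
    then show ?thesis unfolding u_def by (simp add: algebra_simps)
  qed
  have "(\<Sum>k<Suc n. (-1)^k * ww n k) = (\<Sum>k<Suc n. u k - u (Suc k))"
    by (intro sum.cong) (auto simp: step)
  also have "\<dots> = u 0 - u (Suc n)" by (rule sum_lessThan_telescope')
  also have "\<dots> = 1/2" unfolding u_def v_def using n1 by simp
  finally have A: "(\<Sum>k<Suc n. (-1)^k * ww n k) = 1/2" .
  have "(\<Sum>k<Suc n. (-1)^k * ww n k) = 1 + (\<Sum>i<n. (-1)^(Suc i) * ww n (Suc i))"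
    by (simp only: sum.lessThan_Suc_shift) simp
  also have "(\<Sum>i<n. (-1)^(Suc i) * ww n (Suc i)) = - (\<Sum>k=1..n. (-1)^(k-1) * ww n k / real k ^ (2*0))"
    unfolding sum_1_shift by (simp add: sum_negf[symmetric])
  finally show ?thesis unfolding PP_def using A by simp
qed

lemma PP_Suc: "PP (Suc m) (Suc j) = PP m (Suc j) + PP (Suc m) j / (real m + 1)^2"
proof -
  have e1: "PP m (Suc j) = 2 * (\<Sum>k=1..Suc m. (-1)^(k-1) * ww m k / real k ^ (2*Suc j))"
    unfolding PP_def by simp
  have t: "(-1)^(k-1) * ww (Suc m) k / real k ^ (2*Suc j) - (-1)^(k-1) * ww m k / real k ^ (2*Suc j)
     = (-1)^(k-1) * ww (Suc m) k / real k ^ (2*j) / (real m + 1)^2" if k: "k \<in> {1..Suc m}" for k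
  proof -
    have kk: "k \<le> Suc m" "k \<ge> 1" using k by auto
    have w: "ww (Suc m) k * ((real m + 1)^2 - (real k)^2) = ww m k * (real m + 1)^2"
      by (rule ww_Suc_n[OF kk(1)])
    have w': "ww m k = ww (Suc m) k - ww (Suc m) k * (real k)^2 / (real m + 1)^2"
    proof -
      have "(real m + 1)^2 > 0" by simp
      then show ?thesis using w by (simp add: field_simps)
    qed
    have kp: "real k ^ (2 * Suc j) = real k ^ (2*j) * (real k)^2" by (simp add: power_add power2_eq_square)
    have "real k > 0" using kk by simp
    then show ?thesis unfolding w' kp by (simp add: field_simps)
  qed
  have "PP (Suc m) (Suc j) - PP m (Suc j) = 2 * (\<Sum>k=1..Suc m. (-1)^(k-1) * ww (Suc m) k / real k ^ (2*Suc j) - (-1)^(k-1) * ww m k / real k ^ (2*Suc j))"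
    unfolding e1 by (simp add: PP_def sum_subtractf algebra_simps)
  also have "\<dots> = 2 * (\<Sum>k=1..Suc m. (-1)^(k-1) * ww (Suc m) k / real k ^ (2*j) / (real m + 1)^2)"
    using t by simp
  also have "\<dots> = PP (Suc m) j / (real m + 1)^2"
    unfolding PP_def sum_divide_distrib[symmetric] by simp
  finally show ?thesis by simp
qed

lemma PP_rec: "PP n (Suc j) = (\<Sum>m=1..n. PP m j / (real m)^2)"
proof (induction n)
  case 0 then show ?case by (simp add: PP_def)
next
  case (Suc n) then show ?case by (simp add: PP_Suc add.commute)
qed

lemma star_tuples_0: "star_tuples n 0 = {[]}"
  unfolding star_tuples_def by auto

lemma finite_star_tuples: "finite (star_tuples n j)"
proof -
  have "star_tuples n j \<subseteq> {ks. set ks \<subseteq> {1..n} \<and> length ks = j}"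
    unfolding star_tuples_def by auto
  moreover have "finite {ks. set ks \<subseteq> {1..n} \<and> length ks = j}"
    by (rule finite_lists_length_eq) simp
  ultimately show ?thesis by (rule finite_subset)
qed

lemma star_tuples_Suc: "star_tuples n (Suc j) = (\<lambda>(m,r). m # r) ` (SIGMA m:{1..n}. star_tuples m j)"
proof
  show "star_tuples n (Suc j) \<subseteq> (\<lambda>(m,r). m # r) ` (SIGMA m:{1..n}. star_tuples m j)"
  proof
    fix ks assume "ks \<in> star_tuples n (Suc j)"
    then have ks: "length ks = Suc j" "set ks \<subseteq> {1..n}" "sorted_wrt (\<ge>) ks"
      unfolding star_tuples_def by auto
    then obtain m r where mr: "ks = m # r" by (cases ks) auto
    have "m \<in> {1..n}" using ks mr by auto
    moreover have "r \<in> star_tuples m j"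
      using ks mr unfolding star_tuples_def by auto
    ultimately show "ks \<in> (\<lambda>(m,r). m # r) ` (SIGMA m:{1..n}. star_tuples m j)"
      using mr by force
  qed
next
  show "(\<lambda>(m,r). m # r) ` (SIGMA m:{1..n}. star_tuples m j) \<subseteq> star_tuples n (Suc j)"
    unfolding star_tuples_def by fastforce
qed

lemma zeta_0: "zeta_star2 n 0 = 1"
  unfolding zeta_star2_def star_tuples_0 by simp

lemma zeta_rec: "zeta_star2 n (Suc j) = (\<Sum>m=1..n. zeta_star2 m j / (real m)^2)"
proof -
  have inj: "inj_on (\<lambda>(m,r). m # r) (SIGMA m:{1..n}. star_tuples m j)"
    by (auto simp: inj_on_def)
  have "zeta_star2 n (Suc j) = (\<Sum>(m,r)\<in>(SIGMA m:{1..n}. star_tuples m j). \<Prod>i<Suc j. 1 / (real ((m#r) ! i))^2)"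
    unfolding zeta_star2_def star_tuples_Suc sum.reindex[OF inj] by (simp add: case_prod_beta)
  also have "\<dots> = (\<Sum>m=1..n. \<Sum>r\<in>star_tuples m j. \<Prod>i<Suc j. 1 / (real ((m#r) ! i))^2)"
    by (rule sum.Sigma[symmetric]) (auto simp: finite_star_tuples)
  also have "\<dots> = (\<Sum>m=1..n. \<Sum>r\<in>star_tuples m j. 1 / (real m)^2 * (\<Prod>i<j. 1 / (real (r ! i))^2))"
    by (simp only: prod.lessThan_Suc_shift nth_Cons_0 nth_Cons_Suc)
  also have "\<dots> = (\<Sum>m=1..n. zeta_star2 m j / (real m)^2)"
    unfolding zeta_star2_def by (simp add: sum_divide_distrib)
  finally show ?thesis .
qed

lemma zeta_PP: "n \<ge> 1 \<Longrightarrow> zeta_star2 n j = PP n j"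
proof (induction j arbitrary: n)
  case 0 then show ?case by (simp add: zeta_0 PP_0)
next
  case (Suc j)
  show ?case unfolding zeta_rec PP_rec using Suc.IH by (intro sum.cong) auto
qed

definition CC :: "nat \<Rightarrow> nat \<Rightarrow> real" where "CC k N = (\<Sum>n=1..N. FF n k)"
definition dd :: "nat \<Rightarrow> nat \<Rightarrow> real" where "dd i N = 2 * (real (Suc N) - real i) * FF (Suc N) i"
definition ee :: "nat \<Rightarrow> nat \<Rightarrow> real" where "ee k N = (\<Sum>i<k. dd i N)"

lemma CC_tel: "real (Suc k) * CC (Suc k) N - real k * CC k N = GG k (Suc N) - GG k 1"
proof -
  have "real (Suc k) * CC (Suc k) N - real k * CC k N = (\<Sum>n=1..N. (real k + 1) * FF n (Suc k) - real k * FF n k)"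
    unfolding CC_def by (simp add: sum_distrib_left sum_subtractf algebra_simps)
  also have "\<dots> = (\<Sum>n=1..N. GG k (Suc n) - GG k n)"
    by (intro sum.cong refl FF_zeil) auto
  also have "\<dots> = GG k (Suc N) - GG k 1" by (rule sum_Suc_diff) simp
  finally show ?thesis .
qed

lemma GG_1: "GG k 1 = (if k = 0 then -1 else 0)"
proof -
  have "ca 1 = 1/2" by (simp add: ca_def)
  then show ?thesis
    by (cases "k = 0"; cases "k = 1") (auto simp: GG_def FF_def)
qed

lemma CC_main: "real (Suc k) * CC (Suc k) N = 1 - ee (Suc k) N"
proof (induction k)
  case 0
  have "real (Suc 0) * CC (Suc 0) N - real 0 * CC 0 N = GG 0 (Suc N) - (-1)"
    using CC_tel[of 0 N] unfolding GG_1 by simp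
  then show ?case by (simp add: ee_def dd_def GG_def algebra_simps)
next
  case (Suc k)
  have "real (Suc (Suc k)) * CC (Suc (Suc k)) N = real (Suc k) * CC (Suc k) N + GG (Suc k) (Suc N)"
    using CC_tel[of "Suc k" N] unfolding GG_1 by simp
  moreover have "GG (Suc k) (Suc N) = - dd (Suc k) N" by (simp add: GG_def dd_def algebra_simps)
  moreover have "ee (Suc (Suc k)) N = ee (Suc k) N + dd (Suc k) N" by (simp add: ee_def)
  ultimately show ?case using Suc by simp
qed

lemma FF_nonneg: "FF n k \<ge> 0"
  unfolding FF_def using ca_pos[of n] ww_bounds[of n k] by simp

lemma dd_nonneg: "dd i N \<ge> 0"
proof (cases "i \<le> Suc N")
  case True then show ?thesis unfolding dd_def using FF_nonneg[of "Suc N" i] by simp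
next
  case False then show ?thesis by (simp add: dd_def FF_def)
qed

lemma dd_le: "dd i N \<le> 2 * ca (Suc N)"
proof (cases "i \<le> Suc N")
  case True
  have "dd i N = 2 * ((real (Suc N) - real i) / real (Suc N)) * ca (Suc N) * ww (Suc N) i"
    unfolding dd_def FF_def by simp
  also have "\<dots> \<le> 2 * 1 * ca (Suc N) * 1"
    using True ww_bounds[of "Suc N" i] ca_pos[of "Suc N"]
    by (intro mult_mono) (auto simp: divide_le_eq_1)
  finally show ?thesis by simp
next
  case False then show ?thesis using ca_pos[of "Suc N"] by (simp add: dd_def FF_def)
qed

lemma CC_nonneg: "CC k N \<ge> 0"
  unfolding CC_def using FF_nonneg by (simp add: sum_nonneg)

lemma ee_le: "ee N N \<le> 1"
proof (cases N)
  case 0 then show ?thesis by (simp add: ee_def)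
next
  case (Suc m)
  have "0 \<le> real (Suc m) * CC (Suc m) N" using CC_nonneg[of "Suc m" N] by simp
  then show ?thesis using CC_main[of m N] Suc by simp
qed

lemma alt_bound:
  fixes f :: "nat \<Rightarrow> real"
  assumes mono: "\<And>k. k \<ge> a \<Longrightarrow> f (Suc k) \<le> f k" and pos: "\<And>k. f k \<ge> 0"
  shows "0 \<le> (\<Sum>k\<in>{a..<a+m}. (-1)^(k-a) * f k) \<and> (\<Sum>k\<in>{a..<a+m}. (-1)^(k-a) * f k) \<le> f a"
  using mono
proof (induction m arbitrary: a)
  case 0 then show ?case using pos by simp
next
  case (Suc m)
  have IH: "0 \<le> (\<Sum>k\<in>{Suc a..<Suc a+m}. (-1)^(k-Suc a) * f k) \<and> (\<Sum>k\<in>{Suc a..<Suc a+m}. (-1)^(k-Suc a) * f k) \<le> f (Suc a)"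
    using Suc.prems by (intro Suc.IH) auto
  have set: "{a..<a + Suc m} = insert a {Suc a..<Suc a+m}" by auto
  have "(\<Sum>k\<in>{Suc a..<Suc a+m}. (-1)^(k-a) * f k) = - (\<Sum>k\<in>{Suc a..<Suc a+m}. (-1)^(k-Suc a) * f k)"
    unfolding sum_negf[symmetric]
  proof (intro sum.cong refl)
    fix k assume "k \<in> {Suc a..<Suc a+m}"
    then have "k - a = Suc (k - Suc a)" by auto
    then show "(-1)^(k-a) * f k = - ((-1)^(k-Suc a) * f k)" by simp
  qed
  then have "(\<Sum>k\<in>{a..<a+Suc m}. (-1)^(k-a) * f k) = f a - (\<Sum>k\<in>{Suc a..<Suc a+m}. (-1)^(k-Suc a) * f k)"
    unfolding set by simp
  moreover have "f (Suc a) \<le> f a" using Suc.prems by simp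
  ultimately show ?case using IH by linarith
qed

definition AA :: "nat \<Rightarrow> nat \<Rightarrow> real" where "AA p N = (\<Sum>k=1..N. (-1)^(k-1) / real k ^ p)"
definition EE :: "nat \<Rightarrow> nat \<Rightarrow> real" where "EE p N = (\<Sum>k=1..N. (-1)^(k-1) * ee k N / real k ^ p)"

lemma S_eq:
  "(\<Sum>n<N. real ((2*(n+1)) choose (n+1)) / (real (n+1) * 4^(n+1)) * zeta_star2 (n+1) j)
    = 2 * AA (2*j+1) N - 2 * EE (2*j+1) N"
proof -
  have "(\<Sum>n<N. real ((2*(n+1)) choose (n+1)) / (real (n+1) * 4^(n+1)) * zeta_star2 (n+1) j)
      = (\<Sum>n<N. ca (Suc n) / real (Suc n) * PP (Suc n) j)"
    by (intro sum.cong refl) (simp add: zeta_PP ca_def)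
  also have "\<dots> = (\<Sum>n=1..N. ca n / real n * PP n j)" by (rule sum_1_shift[symmetric])
  also have "\<dots> = (\<Sum>n=1..N. 2 * (\<Sum>k=1..N. (-1)^(k-1) * FF n k / real k ^ (2*j)))"
  proof (intro sum.cong refl)
    fix n assume n: "n \<in> {1..N}"
    have "ca n / real n * PP n j = 2 * (\<Sum>k=1..n. (-1)^(k-1) * FF n k / real k ^ (2*j))"
      unfolding PP_def FF_def by (simp add: sum_distrib_left ac_simps)
    also have "(\<Sum>k=1..n. (-1)^(k-1) * FF n k / real k ^ (2*j)) = (\<Sum>k=1..N. (-1)^(k-1) * FF n k / real k ^ (2*j))"
      using n by (intro sum.mono_neutral_left) (auto simp: FF_def)
    finally show "ca n / real n * PP n j = 2 * (\<Sum>k=1..N. (-1)^(k-1) * FF n k / real k ^ (2*j))" .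
  qed
  also have "\<dots> = 2 * (\<Sum>k=1..N. (-1)^(k-1) / real k ^ (2*j) * CC k N)"
    unfolding CC_def sum_distrib_left[symmetric] by (subst sum.swap) (simp add: sum_distrib_left)
  also have "\<dots> = 2 * (\<Sum>k=1..N. (-1)^(k-1) / real k ^ (2*j+1) - (-1)^(k-1) * ee k N / real k ^ (2*j+1))"
  proof (intro arg_cong[where f="\<lambda>x. 2*x"] sum.cong refl)
    fix k assume k: "k \<in> {1..N}"
    then have "Suc (k-1) = k" by auto
    then have c: "real k * CC k N = 1 - ee k N" using CC_main[of "k-1" N] by simp
    have kp: "real k > 0" using k by auto
    have cc: "CC k N = (1 - ee k N) / real k" using c kp by (simp add: field_simps)
    show "(-1)^(k-1) / real k ^ (2*j) * CC k N = (-1)^(k-1) / real k ^ (2*j+1) - (-1)^(k-1) * ee k N / real k ^ (2*j+1)"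
      unfolding cc using kp by (simp add: field_simps)
  qed
  also have "\<dots> = 2 * AA (2*j+1) N - 2 * EE (2*j+1) N"
    unfolding AA_def EE_def by (simp add: sum_subtractf)
  finally show ?thesis .
qed

lemma EE_bound: "p \<ge> 1 \<Longrightarrow> \<bar>EE p N\<bar> \<le> (\<Sum>i<N. dd i N / real (Suc i))"
proof -
  assume p: "p \<ge> 1"
  define TT where "TT i = (\<Sum>k\<in>{Suc i..<Suc N}. (-1)^(k-1) / real k ^ p)" for i
  have ee': "ee k N = (\<Sum>i<N. if i < k then dd i N else 0)" if "k \<in> {1..N}" for k
  proof -
    have "(\<Sum>i<N. if i < k then dd i N else 0) = (\<Sum>i\<in>{..<N} \<inter> {i. i < k}. dd i N)"
      by (simp add: sum.inter_restrict)
    also have "{..<N} \<inter> {i. i < k} = {..<k}" using that by auto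
    finally show ?thesis by (simp add: ee_def)
  qed
  have "EE p N = (\<Sum>k=1..N. \<Sum>i<N. (-1)^(k-1) / real k ^ p * (if i < k then dd i N else 0))"
    unfolding EE_def by (intro sum.cong refl) (simp add: ee' sum_distrib_left sum_divide_distrib)
  also have "\<dots> = (\<Sum>i<N. \<Sum>k=1..N. (-1)^(k-1) / real k ^ p * (if i < k then dd i N else 0))"
    by (rule sum.swap)
  also have "\<dots> = (\<Sum>i<N. dd i N * TT i)"
  proof (intro sum.cong refl)
    fix i assume i: "i \<in> {..<N}"
    have "(\<Sum>k=1..N. (-1)^(k-1) / real k ^ p * (if i < k then dd i N else 0))
       = (\<Sum>k\<in>{1..N} \<inter> {k. i < k}. (-1)^(k-1) / real k ^ p * dd i N)"
      by (subst sum.inter_restrict) (auto intro!: sum.cong)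
    also have "{1..N} \<inter> {k. i < k} = {Suc i..<Suc N}" by auto
    also have "(\<Sum>k\<in>{Suc i..<Suc N}. (-1)^(k-1) / real k ^ p * dd i N) = dd i N * TT i"
      unfolding TT_def sum_distrib_left by (intro sum.cong refl) simp
    finally show "(\<Sum>k=1..N. (-1)^(k-1) / real k ^ p * (if i < k then dd i N else 0)) = dd i N * TT i" .
  qed
  finally have E: "EE p N = (\<Sum>i<N. dd i N * TT i)" .
  have T: "\<bar>TT i\<bar> \<le> 1 / real (Suc i)" if i: "i < N" for i
  proof -
    define f where "f k = 1 / real k ^ p" for k
    have fm: "f (Suc k) \<le> f k" if "k \<ge> Suc i" for k
      unfolding f_def using that by (auto intro!: divide_left_mono power_mono mult_pos_pos)
    have fp: "f k \<ge> 0" for k unfolding f_def by simp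
    have B: "0 \<le> (\<Sum>k\<in>{Suc i..<Suc i + (N - i)}. (-1)^(k - Suc i) * f k) \<and>
             (\<Sum>k\<in>{Suc i..<Suc i + (N - i)}. (-1)^(k - Suc i) * f k) \<le> f (Suc i)"
      by (rule alt_bound[where f=f and a="Suc i", OF fm fp]) auto
    have "TT i = (-1)^i * (\<Sum>k\<in>{Suc i..<Suc i + (N - i)}. (-1)^(k - Suc i) * f k)"
      unfolding TT_def sum_distrib_left
    proof (intro sum.cong)
      show "{Suc i..<Suc N} = {Suc i..<Suc i + (N - i)}" using i by auto
    next
      fix k assume "k \<in> {Suc i..<Suc i + (N - i)}"
      then have "k - 1 = i + (k - Suc i)" by auto
      then show "(-1)^(k-1) / real k ^ p = (-1)^i * ((-1)^(k - Suc i) * f k)"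
        unfolding f_def by (simp add: power_add)
    qed
    then have "\<bar>TT i\<bar> \<le> f (Suc i)" using B by (simp add: abs_mult)
    also have "f (Suc i) \<le> 1 / real (Suc i)"
    proof -
      have "real (Suc i) ^ 1 \<le> real (Suc i) ^ p" using p by (intro power_increasing) auto
      then show ?thesis unfolding f_def by (intro divide_left_mono) auto
    qed
    finally show ?thesis .
  qed
  have "\<bar>EE p N\<bar> \<le> (\<Sum>i<N. \<bar>dd i N * TT i\<bar>)" unfolding E by (rule sum_abs)
  also have "\<dots> \<le> (\<Sum>i<N. dd i N / real (Suc i))"
  proof (intro sum_mono)
    fix i assume "i \<in> {..<N}"
    then have "\<bar>TT i\<bar> \<le> 1 / real (Suc i)" using T by auto
    then have "dd i N * \<bar>TT i\<bar> \<le> dd i N * (1 / real (Suc i))"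
      using dd_nonneg by (intro mult_left_mono) auto
    then show "\<bar>dd i N * TT i\<bar> \<le> dd i N / real (Suc i)" using dd_nonneg[of i N] by (simp add: abs_mult)
  qed
  finally show ?thesis .
qed

lemma dd_sum_bound: "(\<Sum>i<N. dd i N / real (Suc i)) \<le> 2 * real L * ca (Suc N) + 1 / real (Suc L)"
proof -
  let ?c = "2 * ca (Suc N)"
  have "(\<Sum>i<N. dd i N / real (Suc i)) \<le> (\<Sum>i<N. (if i < L then ?c else 0) + dd i N / real (Suc L))"
  proof (intro sum_mono)
    fix i assume "i \<in> {..<N}"
    show "dd i N / real (Suc i) \<le> (if i < L then ?c else 0) + dd i N / real (Suc L)"
    proof (cases "i < L")
      case True
      have "dd i N * 1 \<le> dd i N * real (Suc i)" using dd_nonneg[of i N] by (intro mult_left_mono) auto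
      then have "dd i N / real (Suc i) \<le> dd i N" by (simp add: divide_le_eq)
      also have "\<dots> \<le> ?c" by (rule dd_le)
      moreover have "0 \<le> dd i N / real (Suc L)" using dd_nonneg[of i N] by simp
      ultimately show ?thesis using True by simp
    next
      case False
      have "dd i N / real (Suc i) \<le> dd i N / real (Suc L)"
        using False dd_nonneg[of i N] by (intro divide_left_mono) auto
      then show ?thesis using False by simp
    qed
  qed
  also have "\<dots> = (\<Sum>i<N. if i < L then ?c else 0) + ee N N / real (Suc L)"
    by (simp add: sum.distrib ee_def sum_divide_distrib)
  also have "(\<Sum>i<N. if i < L then ?c else 0) = (\<Sum>i\<in>{..<N} \<inter> {i. i < L}. ?c)"
    by (subst sum.inter_restrict) auto
  also have "\<dots> = real (card ({..<N} \<inter> {i. i < L})) * ?c" by simp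
  also have "\<dots> \<le> real L * ?c"
  proof (intro mult_right_mono)
    have "card ({..<N} \<inter> {i. i < L}) \<le> card {..<L}" by (intro card_mono) auto
    then show "real (card ({..<N} \<inter> {i. i < L})) \<le> real L" by simp
  qed (use ca_pos[of "Suc N"] in simp)
  also have "ee N N / real (Suc L) \<le> 1 / real (Suc L)"
    using ee_le[of N] by (intro divide_right_mono) auto
  finally show ?thesis by simp
qed

lemma EE_lim: "p \<ge> 1 \<Longrightarrow> EE p \<longlonglongrightarrow> 0"
proof -
  assume p: "p \<ge> 1"
  show ?thesis unfolding LIMSEQ_iff
  proof (intro allI impI)
    fix r :: real assume r: "r > 0"
    obtain L where L: "inverse (real (Suc L)) < r/2" using reals_Archimedean[of "r/2"] r by auto
    have "r / (4 * real (Suc L)) > 0" using r by simp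
    then obtain no where no: "\<And>n. n \<ge> no \<Longrightarrow> norm (ca n - 0) < r / (4 * real (Suc L))"
      using ca_lim[THEN LIMSEQ_D] by blast
    have "\<forall>N\<ge>no. norm (EE p N - 0) < r"
    proof (intro allI impI)
      fix N assume N: "N \<ge> no"
      have c: "ca (Suc N) < r / (4 * real (Suc L))" using no[of "Suc N"] N ca_pos[of "Suc N"] by simp
      have "2 * real L * ca (Suc N) \<le> 2 * real L * (r / (4 * real (Suc L)))"
        using c by (intro mult_left_mono) auto
      also have "\<dots> \<le> r / 2" using r by (simp add: field_simps)
      finally have c2: "2 * real L * ca (Suc N) \<le> r / 2" .
      have "\<bar>EE p N\<bar> \<le> 2 * real L * ca (Suc N) + 1 / real (Suc L)"
        using EE_bound[OF p, of N] dd_sum_bound[of N L] by linarith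
      then show "norm (EE p N - 0) < r" using c2 L by (simp add: inverse_eq_divide)
    qed
    then show "\<exists>no. \<forall>N\<ge>no. norm (EE p N - 0) < r" by blast
  qed
qed

theorem mainTheorem12:
  fixes j :: nat
  shows "(\<lambda>n. real ((2*(n+1)) choose (n+1)) / (real (n+1) * 4^(n+1)) * zeta_star2 (n+1) j)
           sums (2 * dirichlet_eta (2 * real j + 1))"
proof -
  define p where "p = 2*j+1"
  define a where "a n = 1 / real (Suc n) ^ p" for n
  have a0: "a \<longlonglongrightarrow> 0"
  proof (rule real_tendsto_sandwich[of "\<lambda>_. 0" _ _ "\<lambda>n. inverse (real (Suc n))"])
    show "\<forall>\<^sub>F n in sequentially. 0 \<le> a n" by (simp add: a_def)
    have "a n \<le> inverse (real (Suc n))" for n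
    proof -
      have "real (Suc n) ^ 1 \<le> real (Suc n) ^ p" unfolding p_def by (intro power_increasing) auto
      then show ?thesis unfolding a_def inverse_eq_divide by (intro divide_left_mono) auto
    qed
    then show "\<forall>\<^sub>F n in sequentially. a n \<le> inverse (real (Suc n))" by simp
    show "(\<lambda>n. inverse (real (Suc n))) \<longlonglongrightarrow> 0" by (rule LIMSEQ_inverse_real_of_nat)
  qed simp
  have apos: "0 \<le> a n" for n by (simp add: a_def)
  have amono: "a (Suc n) \<le> a n" for n
    unfolding a_def by (intro divide_left_mono power_mono) auto
  have summ: "summable (\<lambda>n. (-1)^n * a n)" by (rule summable_Leibniz'(1)[OF a0 apos amono])
  have eta: "dirichlet_eta (2 * real j + 1) = (\<Sum>n. (-1)^n * a n)"
  proof -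
    have "real (n+1) powr (2 * real j + 1) = real (Suc n) ^ p" for n
    proof -
      have "2 * real j + 1 = real p" unfolding p_def by simp
      then show ?thesis by (simp add: powr_realpow)
    qed
    then show ?thesis unfolding dirichlet_eta_def a_def by simp
  qed
  have AA_eq: "AA p N = (\<Sum>n<N. (-1)^n * a n)" for N
    unfolding AA_def a_def sum_1_shift by simp
  have A: "AA p \<longlonglongrightarrow> dirichlet_eta (2 * real j + 1)"
    unfolding eta AA_eq using summable_LIMSEQ[OF summ] by simp
  have E: "EE p \<longlonglongrightarrow> 0" by (rule EE_lim) (simp add: p_def)
  have "(\<lambda>N. 2 * AA p N - 2 * EE p N) \<longlonglongrightarrow> 2 * dirichlet_eta (2 * real j + 1) - 2 * 0"
    by (intro tendsto_intros A E)
  then show ?thesis unfolding sums_def S_eq p_def by simp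
qed

end
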